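(* Let $M$ be an extremally $\aleph_0$-saturated model of a complete affine theory $T$ and let $P,Q:M^n\to[0,\infty)$ be definable predicates. Then $Z(P)\subseteq Z(Q)$ if and only if for every $\epsilon>0$ there is $\lambda\ge0$ such that $Q(\bar x)\le\lambda P(\bar x)+\epsilon$ for all $\bar x\in M^n$.
   Context: Affine continuous logic: $L$-structures are complete metric spaces $(M,d)$ with $d\le1$ and Lipschitz interpretations of function symbols and $[0,1]$-valued relation symbols. Affine formulas are built from $1$ and atomic formulas (including $d$) using only $r\cdot\phi$ ($r\in\mathbb R$), $\phi+\psi$, $\inf_x$, $\sup_x$. For $A\subseteq M$, an $n$-type over $A$ is a maximal set of conditions with parameters from $A$ satisfiable with the theory of $(M,a)_{a\in A}$, identified with a positive normalized linear functional on formulas; a type is extreme if it is an extreme point of the convex set $S_n(A)$. $M$ is extremally $\aleph_0$-saturated if for every finite $A\subseteq M$ every extreme type in $S_n(A)$ is realized in $M$. A predicate $P:M^n\to\mathbb R$ is definable (without parameters) if it is a uniform limit of $\phi_k^M$ for affine formulas $\phi_k$. $Z(P)=\{\bar a\in M^n:P(\bar a)=0\}$. *)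

theory Defs
  imports "HOL-Analysis.Analysis"
begin

record ('f, 'r) lang =
  farity :: "'f \<Rightarrow> nat"
  rarity :: "'r \<Rightarrow> nat"

datatype ('a, 'f) trm = Var nat | Par 'a | Fn 'f "('a, 'f) trm list"

datatype ('a, 'f, 'r) fm =
    FOne
  | Atom 'r "('a, 'f) trm list"
  | Dist "('a, 'f) trm" "('a, 'f) trm"
  | Scale real "('a, 'f, 'r) fm"
  | Plus "('a, 'f, 'r) fm" "('a, 'f, 'r) fm"
  | FInf nat "('a, 'f, 'r) fm"
  | FSup nat "('a, 'f, 'r) fm"

fun wf_trm :: "('f, 'r) lang \<Rightarrow> ('a, 'f) trm \<Rightarrow> bool" where
  "wf_trm L (Var i) = True"
| "wf_trm L (Par a) = True"
| "wf_trm L (Fn f ts) = (length ts = farity L f \<and> (\<forall>t\<in>set ts. wf_trm L t))"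

fun fv_trm :: "('a, 'f) trm \<Rightarrow> nat set" where
  "fv_trm (Var i) = {i}"
| "fv_trm (Par a) = {}"
| "fv_trm (Fn f ts) = (\<Union>t\<in>set ts. fv_trm t)"

fun params_trm :: "('a, 'f) trm \<Rightarrow> 'a set" where
  "params_trm (Var i) = {}"
| "params_trm (Par a) = {a}"
| "params_trm (Fn f ts) = (\<Union>t\<in>set ts. params_trm t)"

fun wf_fm :: "('f, 'r) lang \<Rightarrow> ('a, 'f, 'r) fm \<Rightarrow> bool" where
  "wf_fm L FOne = True"
| "wf_fm L (Atom r ts) = (length ts = rarity L r \<and> (\<forall>t\<in>set ts. wf_trm L t))"
| "wf_fm L (Dist t u) = (wf_trm L t \<and> wf_trm L u)"
| "wf_fm L (Scale c \<phi>) = wf_fm L \<phi>"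
| "wf_fm L (Plus \<phi> \<psi>) = (wf_fm L \<phi> \<and> wf_fm L \<psi>)"
| "wf_fm L (FInf x \<phi>) = wf_fm L \<phi>"
| "wf_fm L (FSup x \<phi>) = wf_fm L \<phi>"

fun fv_fm :: "('a, 'f, 'r) fm \<Rightarrow> nat set" where
  "fv_fm FOne = {}"
| "fv_fm (Atom r ts) = (\<Union>t\<in>set ts. fv_trm t)"
| "fv_fm (Dist t u) = fv_trm t \<union> fv_trm u"
| "fv_fm (Scale c \<phi>) = fv_fm \<phi>"
| "fv_fm (Plus \<phi> \<psi>) = fv_fm \<phi> \<union> fv_fm \<psi>"
| "fv_fm (FInf x \<phi>) = fv_fm \<phi> - {x}"
| "fv_fm (FSup x \<phi>) = fv_fm \<phi> - {x}"

fun params_fm :: "('a, 'f, 'r) fm \<Rightarrow> 'a set" where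
  "params_fm FOne = {}"
| "params_fm (Atom r ts) = (\<Union>t\<in>set ts. params_trm t)"
| "params_fm (Dist t u) = params_trm t \<union> params_trm u"
| "params_fm (Scale c \<phi>) = params_fm \<phi>"
| "params_fm (Plus \<phi> \<psi>) = params_fm \<phi> \<union> params_fm \<psi>"
| "params_fm (FInf x \<phi>) = params_fm \<phi>"
| "params_fm (FSup x \<phi>) = params_fm \<phi>"

record ('a, 'f, 'r) struct =
  carrier :: "'a set"
  mdist :: "'a \<Rightarrow> 'a \<Rightarrow> real"
  fun_int :: "'f \<Rightarrow> 'a list \<Rightarrow> 'a"
  rel_int :: "'r \<Rightarrow> 'a list \<Rightarrow> real"

definition tuples :: "('a, 'f, 'r) struct \<Rightarrow> nat \<Rightarrow> 'a list set" where
  "tuples M n = {xs. length xs = n \<and> set xs \<subseteq> carrier M}"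

definition sum_dist :: "('a, 'f, 'r) struct \<Rightarrow> 'a list \<Rightarrow> 'a list \<Rightarrow> real" where
  "sum_dist M xs ys = sum_list (map2 (mdist M) xs ys)"

definition is_structure :: "('f, 'r) lang \<Rightarrow> ('a, 'f, 'r) struct \<Rightarrow> bool" where
  "is_structure L M \<longleftrightarrow>
     carrier M \<noteq> {} \<and>
     (\<forall>x\<in>carrier M. \<forall>y\<in>carrier M.
        0 \<le> mdist M x y \<and> mdist M x y \<le> 1 \<and>
        (mdist M x y = 0 \<longleftrightarrow> x = y) \<and> mdist M x y = mdist M y x \<and>
        (\<forall>z\<in>carrier M. mdist M x z \<le> mdist M x y + mdist M y z)) \<and>
     (\<forall>s::nat \<Rightarrow> 'a. (\<forall>k. s k \<in> carrier M) \<longrightarrow>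
        (\<forall>e>0. \<exists>N. \<forall>m\<ge>N. \<forall>k\<ge>N. mdist M (s m) (s k) < e) \<longrightarrow>
        (\<exists>l\<in>carrier M. \<forall>e>0. \<exists>N. \<forall>m\<ge>N. mdist M (s m) l < e)) \<and>
     (\<forall>f. (\<forall>xs\<in>tuples M (farity L f). fun_int M f xs \<in> carrier M) \<and>
          (\<exists>C. \<forall>xs\<in>tuples M (farity L f). \<forall>ys\<in>tuples M (farity L f).
              mdist M (fun_int M f xs) (fun_int M f ys) \<le> C * sum_dist M xs ys)) \<and>
     (\<forall>r. (\<forall>xs\<in>tuples M (rarity L r). 0 \<le> rel_int M r xs \<and> rel_int M r xs \<le> 1) \<and>
          (\<exists>C. \<forall>xs\<in>tuples M (rarity L r). \<forall>ys\<in>tuples M (rarity L r).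
              \<bar>rel_int M r xs - rel_int M r ys\<bar> \<le> C * sum_dist M xs ys))"

fun eval_trm :: "('a, 'f, 'r) struct \<Rightarrow> (nat \<Rightarrow> 'a) \<Rightarrow> ('a, 'f) trm \<Rightarrow> 'a" where
  "eval_trm M \<rho> (Var i) = \<rho> i"
| "eval_trm M \<rho> (Par a) = a"
| "eval_trm M \<rho> (Fn f ts) = fun_int M f (map (eval_trm M \<rho>) ts)"

fun eval_fm :: "('a, 'f, 'r) struct \<Rightarrow> (nat \<Rightarrow> 'a) \<Rightarrow> ('a, 'f, 'r) fm \<Rightarrow> real" where
  "eval_fm M \<rho> FOne = 1"
| "eval_fm M \<rho> (Atom r ts) = rel_int M r (map (eval_trm M \<rho>) ts)"
| "eval_fm M \<rho> (Dist t u) = mdist M (eval_trm M \<rho> t) (eval_trm M \<rho> u)"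
| "eval_fm M \<rho> (Scale c \<phi>) = c * eval_fm M \<rho> \<phi>"
| "eval_fm M \<rho> (Plus \<phi> \<psi>) = eval_fm M \<rho> \<phi> + eval_fm M \<rho> \<psi>"
| "eval_fm M \<rho> (FInf x \<phi>) = (INF a\<in>carrier M. eval_fm M (\<rho>(x := a)) \<phi>)"
| "eval_fm M \<rho> (FSup x \<phi>) = (SUP a\<in>carrier M. eval_fm M (\<rho>(x := a)) \<phi>)"

definition tuple_val :: "('a, 'f, 'r) struct \<Rightarrow> 'a list \<Rightarrow> nat \<Rightarrow> 'a" where
  "tuple_val M xs i = (if i < length xs then xs ! i else (SOME a. a \<in> carrier M))"

definition eval_at :: "('a, 'f, 'r) struct \<Rightarrow> ('a, 'f, 'r) fm \<Rightarrow> 'a list \<Rightarrow> real" where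
  "eval_at M \<phi> xs = eval_fm M (tuple_val M xs) \<phi>"

definition fms :: "('f, 'r) lang \<Rightarrow> nat \<Rightarrow> 'a set \<Rightarrow> ('a, 'f, 'r) fm set" where
  "fms L n A = {\<phi>. wf_fm L \<phi> \<and> fv_fm \<phi> \<subseteq> {..<n} \<and> params_fm \<phi> \<subseteq> A}"

text \<open>S_n(A): n-types over A, identified with positive normalized linear
  functionals on formulas (functionals vanish outside the formulas over A,
  so that convex combinations are computed pointwise).  Positivity is with
  respect to the theory of (M,a)_(a in A): T_A entails phi >= 0 iff
  phi^M >= 0 on all of M^n.\<close>
definition types :: "('f, 'r) lang \<Rightarrow> ('a, 'f, 'r) struct \<Rightarrow> nat \<Rightarrow> 'a set
                      \<Rightarrow> (('a, 'f, 'r) fm \<Rightarrow> real) set" where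
  "types L M n A = {p.
     (\<forall>\<phi>. \<phi> \<notin> fms L n A \<longrightarrow> p \<phi> = 0) \<and>
     p FOne = 1 \<and>
     (\<forall>\<phi>\<in>fms L n A. \<forall>\<psi>\<in>fms L n A. p (Plus \<phi> \<psi>) = p \<phi> + p \<psi>) \<and>
     (\<forall>\<phi>\<in>fms L n A. \<forall>c. p (Scale c \<phi>) = c * p \<phi>) \<and>
     (\<forall>\<phi>\<in>fms L n A. (\<forall>xs\<in>tuples M n. 0 \<le> eval_at M \<phi> xs) \<longrightarrow> 0 \<le> p \<phi>)}"

definition extreme_type :: "('f, 'r) lang \<Rightarrow> ('a, 'f, 'r) struct \<Rightarrow> nat \<Rightarrow> 'a set
                      \<Rightarrow> (('a, 'f, 'r) fm \<Rightarrow> real) \<Rightarrow> bool" where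
  "extreme_type L M n A p \<longleftrightarrow> p \<in> types L M n A \<and>
     (\<forall>q1\<in>types L M n A. \<forall>q2\<in>types L M n A. \<forall>t::real. 0 < t \<and> t < 1 \<and>
        p = (\<lambda>\<phi>. t * q1 \<phi> + (1 - t) * q2 \<phi>) \<longrightarrow> q1 = q2)"

definition realizes :: "('f, 'r) lang \<Rightarrow> ('a, 'f, 'r) struct \<Rightarrow> nat \<Rightarrow> 'a set
                      \<Rightarrow> 'a list \<Rightarrow> (('a, 'f, 'r) fm \<Rightarrow> real) \<Rightarrow> bool" where
  "realizes L M n A xs p \<longleftrightarrow> xs \<in> tuples M n \<and> (\<forall>\<phi>\<in>fms L n A. p \<phi> = eval_at M \<phi> xs)"

definition extremally_aleph0_saturated :: "('f, 'r) lang \<Rightarrow> ('a, 'f, 'r) struct \<Rightarrow> bool" where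
  "extremally_aleph0_saturated L M \<longleftrightarrow>
     (\<forall>A n p. finite A \<and> A \<subseteq> carrier M \<and> extreme_type L M n A p \<longrightarrow>
        (\<exists>xs. realizes L M n A xs p))"

definition definable :: "('f, 'r) lang \<Rightarrow> ('a, 'f, 'r) struct \<Rightarrow> nat
                           \<Rightarrow> ('a list \<Rightarrow> real) \<Rightarrow> bool" where
  "definable L M n P \<longleftrightarrow>
     (\<exists>\<phi>::nat \<Rightarrow> ('a, 'f, 'r) fm. (\<forall>k. \<phi> k \<in> fms L n {}) \<and>
        (\<forall>e>0. \<exists>K. \<forall>k\<ge>K. \<forall>xs\<in>tuples M n. \<bar>eval_at M (\<phi> k) xs - P xs\<bar> \<le> e))"

definition zero_set :: "('a, 'f, 'r) struct \<Rightarrow> nat \<Rightarrow> ('a list \<Rightarrow> real) \<Rightarrow> 'a list set" where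
  "zero_set M n P = {xs\<in>tuples M n. P xs = 0}"

end

theory Submission
  imports Defs "HOL-Analysis.Analysis"
begin

lemma compact_imp_closed_fun:
  fixes S :: "('i \<Rightarrow> real) set"
  assumes "compact S" shows "closed S"
proof -
  have "Hausdorff_space (product_topology (\<lambda>i. euclidean::real topology) (UNIV::'i set))"
    by (simp add: Hausdorff_space_product_topology)
  then have H: "Hausdorff_space (euclidean :: ('i \<Rightarrow> real) topology)"
    by (simp only: euclidean_product_topology)
  have "compactin euclidean S" using assms by simp
  then have "closedin euclidean S" by (rule compactin_imp_closedin[OF H])
  then show ?thesis using closed_closedin by blast
qed

lemma compact_box:
  fixes B :: "'i \<Rightarrow> real"
  shows "compact {p::'i\<Rightarrow>real. \<forall>i. \<bar>p i\<bar> \<le> B i}"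
proof -
  have "compactin (product_topology (\<lambda>i. euclidean) UNIV) (PiE UNIV (\<lambda>i. {-B i..B i}))"
    by (subst compactin_PiE) auto
  moreover have "PiE UNIV (\<lambda>i. {-B i..B i}) = {p::'i\<Rightarrow>real. \<forall>i. \<bar>p i\<bar> \<le> B i}"
    by (force simp: PiE_def Pi_def abs_le_iff minus_le_iff)
  ultimately show ?thesis by (simp add: euclidean_product_topology)
qed

definition mix :: "real \<Rightarrow> ('i \<Rightarrow> real) \<Rightarrow> ('i \<Rightarrow> real) \<Rightarrow> 'i \<Rightarrow> real" where
  "mix t p q = (\<lambda>i. t * p i + (1 - t) * q i)"

definition face :: "('i \<Rightarrow> real) set \<Rightarrow> ('i \<Rightarrow> real) set \<Rightarrow> bool" where
  "face K F \<longleftrightarrow> F \<subseteq> K \<and> (\<forall>p\<in>K. \<forall>q\<in>K. \<forall>t. 0 < t \<and> t < 1 \<and> mix t p q \<in> F \<longrightarrow> p \<in> F \<and> q \<in> F)"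

lemma face_refl: "face K K"
  by (auto simp: face_def)

lemma argmax_face:
  assumes fa: "face K F" and cF: "compact F" and ne: "F \<noteq> {}"
    and cont: "continuous_on F f"
    and aff: "\<And>p q t. p \<in> F \<Longrightarrow> q \<in> F \<Longrightarrow> 0 < t \<Longrightarrow> t < 1 \<Longrightarrow> f (mix t p q) = t * f p + (1 - t) * f q"
  shows "face K {p\<in>F. \<forall>q\<in>F. f q \<le> f p} \<and> compact {p\<in>F. \<forall>q\<in>F. f q \<le> f p} \<and> {p\<in>F. \<forall>q\<in>F. f q \<le> f p} \<noteq> {}"
proof -
  let ?G = "{p\<in>F. \<forall>q\<in>F. f q \<le> f p}"
  have "compact (f ` F)" by (rule compact_continuous_image[OF cont cF])
  then obtain m where m: "m \<in> f ` F" "\<forall>y\<in>f ` F. y \<le> m"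
    using compact_attains_sup ne by blast
  have G: "?G = F \<inter> f -` {m..}" using m by force
  have clo: "closed (F \<inter> f -` {m..})"
    by (rule continuous_closed_preimage[OF cont compact_imp_closed_fun[OF cF]]) auto
  then have c: "compact ?G" unfolding G using compact_Int_closed[OF cF clo] by (simp add: Int_left_absorb)
  have n: "?G \<noteq> {}" using m by force
  have "face K ?G"
    unfolding face_def
  proof (intro conjI ballI allI impI)
    show "?G \<subseteq> K" using fa by (auto simp: face_def)
    fix p q t assume pq: "p \<in> K" "q \<in> K" and h: "0 < t \<and> t < 1 \<and> mix t p q \<in> ?G"
    then have "p \<in> F" "q \<in> F" using fa by (auto simp: face_def)
    moreover have "mix t p q \<in> F" using h by auto
    moreover have fm: "\<forall>r\<in>F. f r \<le> f (mix t p q)" using h by auto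
    ultimately have e: "f (mix t p q) = t * f p + (1 - t) * f q" "f p \<le> f (mix t p q)" "f q \<le> f (mix t p q)"
      using aff h by auto
    have "f p = f (mix t p q) \<and> f q = f (mix t p q)"
    proof -
      define a where "a = f p"
      define b where "b = f q"
      define c where "c = f (mix t p q)"
      have ab: "a \<le> c" "b \<le> c" "c = t * a + (1 - t) * b" using e by (auto simp: a_def b_def c_def)
      have t1: "0 \<le> t * (c - a)" using ab h by (intro mult_nonneg_nonneg) auto
      have t2: "0 \<le> (1 - t) * (c - b)" using ab h by (intro mult_nonneg_nonneg) auto
      have "t * (c - a) + (1 - t) * (c - b) = 0" using ab(3) by (simp add: algebra_simps)
      then have "t * (c - a) = 0" "(1 - t) * (c - b) = 0" using t1 t2 by linarith+
      then have "c = a" "c = b" using h by simp_all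
      then show ?thesis by (simp add: a_def b_def c_def)
    qed
    then show "p \<in> ?G" "q \<in> ?G" using fm \<open>p\<in>F\<close> \<open>q\<in>F\<close> by auto
  qed
  then show ?thesis using c n by blast
qed

lemma extreme_exists:
  assumes fa: "face K F" and cF: "compact F" and ne: "F \<noteq> {}"
  shows "\<exists>e\<in>F. \<forall>q1\<in>K. \<forall>q2\<in>K. \<forall>t. 0 < t \<and> t < 1 \<and> e = mix t q1 q2 \<longrightarrow> q1 = q2"
proof -
  define A where "A = {G. face K G \<and> compact G \<and> G \<noteq> {} \<and> G \<subseteq> F}"
  have po: "partial_order_on A (relation_of (\<lambda>X Y. Y \<subseteq> X) A)"
    unfolding partial_order_on_def preorder_on_def refl_on_def trans_on_def antisym_on_def relation_of_def
    by blast
  have "\<exists>m\<in>A. \<forall>a\<in>A. a \<subseteq> m \<longrightarrow> a = m"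
  proof (rule predicate_Zorn[OF po])
    fix C assume C: "C \<in> Chains (relation_of (\<lambda>X Y. Y \<subseteq> X) A)"
    have CA: "C \<subseteq> A" and tot: "\<And>X Y. X \<in> C \<Longrightarrow> Y \<in> C \<Longrightarrow> X \<subseteq> Y \<or> Y \<subseteq> X"
      using C by (auto simp: Chains_def relation_of_def)
    show "\<exists>u\<in>A. \<forall>a\<in>C. u \<subseteq> a"
    proof (cases "C = {}")
      case True
      have "F \<in> A" using fa cF ne by (simp add: A_def)
      then show ?thesis using True by blast
    next
      case False
      then obtain G0 where G0: "G0 \<in> C" by blast
      have cl: "\<And>T. T \<in> C \<Longrightarrow> closed T" using CA by (auto simp: A_def intro: compact_imp_closed_fun)
      have "G0 \<inter> \<Inter>C \<noteq> {}"
      proof (rule compact_imp_fip)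
        show "compact G0" using G0 CA by (auto simp: A_def)
        show "closed T" if "T \<in> C" for T using cl that .
        fix F' assume F': "finite F'" "F' \<subseteq> C"
        show "G0 \<inter> \<Inter>F' \<noteq> {}"
        proof -
          have ch: "subset.chain A (insert G0 F')"
            unfolding subset_chain_def
          proof (intro conjI ballI)
            show "insert G0 F' \<subseteq> A" using F' G0 CA by blast
            fix X Y assume "X \<in> insert G0 F'" "Y \<in> insert G0 F'"
            then have "X \<in> C" "Y \<in> C" using F' G0 by auto
            then show "X \<subseteq> Y \<or> Y \<subseteq> X" by (rule tot)
          qed
          have "\<Inter>(insert G0 F') \<in> insert G0 F'"
            by (rule Inter_in_chain[OF _ _ ch]) (use F' in auto)
          then have "\<Inter>(insert G0 F') \<in> A" using F' G0 CA by auto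
          then show ?thesis by (auto simp: A_def)
        qed
      qed
      then have ne': "\<Inter>C \<noteq> {}" by auto
      have "\<Inter>C \<in> A"
        unfolding A_def
      proof (intro CollectI conjI)
        show "compact (\<Inter>C)"
        proof -
          have cG0: "compact G0" using G0 CA by (auto simp: A_def)
          have "closed (\<Inter>C)" using cl by auto
          then have "compact (G0 \<inter> \<Inter>C)" using cG0 by (rule compact_Int_closed[rotated])
          moreover have "G0 \<inter> \<Inter>C = \<Inter>C" using G0 by blast
          ultimately show ?thesis by simp
        qed
        show "\<Inter>C \<noteq> {}" by (rule ne')
        show "\<Inter>C \<subseteq> F" using G0 CA by (auto simp: A_def)
        show "face K (\<Inter>C)"
          unfolding face_def
        proof (intro conjI ballI allI impI)
          have "G0 \<subseteq> K" using G0 CA by (auto simp: A_def face_def)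
          then show "\<Inter>C \<subseteq> K" using G0 by blast
          fix p q t assume pqt: "p \<in> K" "q \<in> K" "0 < t \<and> t < 1 \<and> mix t p q \<in> \<Inter>C"
          have "\<forall>X\<in>C. p \<in> X \<and> q \<in> X"
          proof
            fix X assume X: "X \<in> C"
            then have "face K X" using CA by (auto simp: A_def)
            moreover have "mix t p q \<in> X" using X pqt by auto
            ultimately show "p \<in> X \<and> q \<in> X" using pqt unfolding face_def by blast
          qed
          then show "p \<in> \<Inter>C" "q \<in> \<Inter>C" by auto
        qed
      qed
      then show ?thesis by blast
    qed
  qed
  then obtain G where GA: "G \<in> A" and mn: "\<And>a. a \<in> A \<Longrightarrow> a \<subseteq> G \<Longrightarrow> a = G" by blast
  have sing: "p = q" if "p \<in> G" "q \<in> G" for p q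
  proof (rule ccontr)
    assume "p \<noteq> q"
    then obtain i where i: "p i \<noteq> q i" by (meson ext)
    let ?H = "{r\<in>G. \<forall>s\<in>G. s i \<le> r i}"
    have "face K ?H \<and> compact ?H \<and> ?H \<noteq> {}"
    proof (rule argmax_face)
      show "face K G" "compact G" "G \<noteq> {}" using GA by (auto simp: A_def)
      show "continuous_on G (\<lambda>s. s i)"
        by (rule continuous_on_subset[OF continuous_on_product_coordinates]) simp
      show "mix t p q i = t * p i + (1 - t) * q i" for p q t
        by (simp add: mix_def)
    qed
    moreover have "?H \<subseteq> G" by blast
    moreover have "G \<subseteq> F" using GA by (simp add: A_def)
    ultimately have "?H \<in> A" unfolding A_def by (intro CollectI conjI) auto
    moreover have "?H \<subseteq> G" by blast
    ultimately have "?H = G" by (rule mn)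
    then have "p \<in> ?H" "q \<in> ?H" using that by simp_all
    then have "q i \<le> p i" "p i \<le> q i" using that by blast+
    then show False using i by auto
  qed
  from GA obtain e where e: "e \<in> G" unfolding A_def by blast
  have "\<forall>q1\<in>K. \<forall>q2\<in>K. \<forall>t. 0 < t \<and> t < 1 \<and> e = mix t q1 q2 \<longrightarrow> q1 = q2"
  proof (intro ballI allI impI)
    fix q1 q2 t assume q: "q1 \<in> K" "q2 \<in> K" "0 < t \<and> t < 1 \<and> e = mix t q1 q2"
    have fG: "face K G" using GA by (simp add: A_def)
    have "mix t q1 q2 \<in> G" using q e by simp
    then have "q1 \<in> G \<and> q2 \<in> G" using fG q unfolding face_def by blast
    then show "q1 = q2" using sing by blast
  qed
  moreover have "e \<in> F" using e GA unfolding A_def by blast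
  ultimately show ?thesis by blast
qed

lemma struct_ne: "is_structure L M \<Longrightarrow> carrier M \<noteq> {}"
  unfolding is_structure_def by blast

lemma struct_fun: "is_structure L M \<Longrightarrow> xs \<in> tuples M (farity L f) \<Longrightarrow> fun_int M f xs \<in> carrier M"
  unfolding is_structure_def by blast

lemma struct_rel: "is_structure L M \<Longrightarrow> xs \<in> tuples M (rarity L r) \<Longrightarrow> 0 \<le> rel_int M r xs \<and> rel_int M r xs \<le> 1"
  unfolding is_structure_def by blast

lemma struct_dist: "is_structure L M \<Longrightarrow> x \<in> carrier M \<Longrightarrow> y \<in> carrier M \<Longrightarrow> 0 \<le> mdist M x y \<and> mdist M x y \<le> 1"
  unfolding is_structure_def by blast

lemma eval_trm_in:
  assumes S: "is_structure L M" and r: "\<forall>i. \<rho> i \<in> carrier M"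
  shows "wf_trm L t \<Longrightarrow> params_trm t \<subseteq> carrier M \<Longrightarrow> eval_trm M \<rho> t \<in> carrier M"
proof (induction t)
  case (Fn f ts)
  have "map (eval_trm M \<rho>) ts \<in> tuples M (farity L f)" using Fn by (auto simp: tuples_def)
  then show ?case using struct_fun[OF S] by simp
qed (use r in auto)

fun fb :: "('a, 'f, 'r) fm \<Rightarrow> real" where
  "fb FOne = 1"
| "fb (Atom r ts) = 1"
| "fb (Dist t u) = 1"
| "fb (Scale c \<phi>) = \<bar>c\<bar> * fb \<phi>"
| "fb (Plus \<phi> \<psi>) = fb \<phi> + fb \<psi>"
| "fb (FInf x \<phi>) = fb \<phi>"
| "fb (FSup x \<phi>) = fb \<phi>"

lemma fb_nonneg: "0 \<le> fb \<phi>"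
  by (induction \<phi>) auto

lemma eval_bound:
  assumes S: "is_structure L M"
  shows "wf_fm L \<phi> \<Longrightarrow> params_fm \<phi> \<subseteq> carrier M \<Longrightarrow> \<forall>i. \<rho> i \<in> carrier M \<Longrightarrow> \<bar>eval_fm M \<rho> \<phi>\<bar> \<le> fb \<phi>"
proof (induction \<phi> arbitrary: \<rho>)
  case FOne
  then show ?case by simp
next
  case (Atom r ts)
  have "\<forall>t\<in>set ts. eval_trm M \<rho> t \<in> carrier M"
  proof
    fix t assume "t \<in> set ts"
    with Atom show "eval_trm M \<rho> t \<in> carrier M" by (intro eval_trm_in[OF S]) auto
  qed
  then have "map (eval_trm M \<rho>) ts \<in> tuples M (rarity L r)"
    using Atom by (auto simp: tuples_def)
  then show ?case using struct_rel[OF S] by fastforce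
next
  case (Dist t u)
  have "eval_trm M \<rho> t \<in> carrier M" "eval_trm M \<rho> u \<in> carrier M"
    using Dist by (auto intro!: eval_trm_in[OF S])
  then show ?case using struct_dist[OF S] by fastforce
next
  case (Scale c \<phi>)
  then have "\<bar>eval_fm M \<rho> \<phi>\<bar> \<le> fb \<phi>" by simp
  then show ?case by (simp add: abs_mult mult_left_mono)
next
  case (Plus \<phi> \<psi>)
  then show ?case by (simp add: abs_triangle_ineq[THEN order_trans] add_mono)
next
  case (FInf x \<phi>)
  have b: "\<bar>eval_fm M (\<rho>(x := a)) \<phi>\<bar> \<le> fb \<phi>" if "a \<in> carrier M" for a
    using FInf that by simp
  have b2: "- fb \<phi> \<le> eval_fm M (\<rho>(x := a)) \<phi>" "eval_fm M (\<rho>(x := a)) \<phi> \<le> fb \<phi>" if "a \<in> carrier M" for a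
    using b[OF that] unfolding abs_le_iff by linarith+
  obtain a0 where a0: "a0 \<in> carrier M" using struct_ne[OF S] by blast
  have lo: "- fb \<phi> \<le> (INF a\<in>carrier M. eval_fm M (\<rho>(x := a)) \<phi>)"
    by (rule cINF_greatest) (use struct_ne[OF S] b2 in auto)
  have "(INF a\<in>carrier M. eval_fm M (\<rho>(x := a)) \<phi>) \<le> eval_fm M (\<rho>(x := a0)) \<phi>"
    by (rule cINF_lower) (use a0 b2 in \<open>auto simp: bdd_below_def intro!: exI[of _ "- fb \<phi>"]\<close>)
  then have hi: "(INF a\<in>carrier M. eval_fm M (\<rho>(x := a)) \<phi>) \<le> fb \<phi>" using b2[OF a0] by linarith
  show ?case using lo hi by (simp add: abs_le_iff)
next
  case (FSup x \<phi>)
  have b: "\<bar>eval_fm M (\<rho>(x := a)) \<phi>\<bar> \<le> fb \<phi>" if "a \<in> carrier M" for a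
    using FSup that by simp
  have b2: "- fb \<phi> \<le> eval_fm M (\<rho>(x := a)) \<phi>" "eval_fm M (\<rho>(x := a)) \<phi> \<le> fb \<phi>" if "a \<in> carrier M" for a
    using b[OF that] unfolding abs_le_iff by linarith+
  obtain a0 where a0: "a0 \<in> carrier M" using struct_ne[OF S] by blast
  have hi: "(SUP a\<in>carrier M. eval_fm M (\<rho>(x := a)) \<phi>) \<le> fb \<phi>"
    by (rule cSUP_least) (use struct_ne[OF S] b2 in auto)
  have "eval_fm M (\<rho>(x := a0)) \<phi> \<le> (SUP a\<in>carrier M. eval_fm M (\<rho>(x := a)) \<phi>)"
    by (rule cSUP_upper) (use a0 b2 in \<open>auto simp: bdd_above_def intro!: exI[of _ "fb \<phi>"]\<close>)
  then have lo: "- fb \<phi> \<le> (SUP a\<in>carrier M. eval_fm M (\<rho>(x := a)) \<phi>)" using b2[OF a0] by linarith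
  show ?case using lo hi by (simp add: abs_le_iff)
qed

lemma tuple_val_in:
  assumes S: "is_structure L M" and xs: "xs \<in> tuples M n"
  shows "\<forall>i. tuple_val M xs i \<in> carrier M"
proof
  fix i
  show "tuple_val M xs i \<in> carrier M"
  proof (cases "i < length xs")
    case True
    then show ?thesis using xs by (auto simp: tuple_val_def tuples_def)
  next
    case False
    then show ?thesis using struct_ne[OF S] by (auto simp: tuple_val_def intro: someI_ex)
  qed
qed

lemma fms_FOne [simp]: "FOne \<in> fms L n A"
  by (simp add: fms_def)
lemma fms_Plus [simp]: "Plus \<phi> \<psi> \<in> fms L n A \<longleftrightarrow> \<phi> \<in> fms L n A \<and> \<psi> \<in> fms L n A"
  by (auto simp: fms_def)
lemma fms_Scale [simp]: "Scale c \<phi> \<in> fms L n A \<longleftrightarrow> \<phi> \<in> fms L n A"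
  by (auto simp: fms_def)

lemma eval_at_simps [simp]:
  "eval_at M FOne xs = 1"
  "eval_at M (Plus \<phi> \<psi>) xs = eval_at M \<phi> xs + eval_at M \<psi> xs"
  "eval_at M (Scale c \<phi>) xs = c * eval_at M \<phi> xs"
  by (simp_all add: eval_at_def)

lemma eval_at_bound:
  assumes S: "is_structure L M" and xs: "xs \<in> tuples M n" and \<phi>: "\<phi> \<in> fms L n A" and A: "A \<subseteq> carrier M"
  shows "\<bar>eval_at M \<phi> xs\<bar> \<le> fb \<phi>"
  unfolding eval_at_def
  by (rule eval_bound[OF S]) (use \<phi> A tuple_val_in[OF S xs] in \<open>auto simp: fms_def\<close>)

lemma type_diff:
  assumes p: "p \<in> types L M n A" and a: "\<alpha> \<in> fms L n A" and b: "\<beta> \<in> fms L n A"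
    and le: "\<forall>xs\<in>tuples M n. eval_at M \<alpha> xs - eval_at M \<beta> xs \<le> e"
  shows "p \<alpha> - p \<beta> \<le> e"
proof -
  let ?g = "Plus (Scale e FOne) (Plus (Scale (-1) \<alpha>) \<beta>)"
  have g: "?g \<in> fms L n A" using a b by simp
  have "\<forall>xs\<in>tuples M n. 0 \<le> eval_at M ?g xs"
  proof
    fix xs assume "xs \<in> tuples M n"
    then have "eval_at M \<alpha> xs - eval_at M \<beta> xs \<le> e" using le by blast
    then show "0 \<le> eval_at M ?g xs" by simp
  qed
  then have "0 \<le> p ?g" using p g unfolding types_def by blast
  moreover have "p ?g = e - p \<alpha> + p \<beta>"
  proof -
    have "p ?g = p (Scale e FOne) + p (Plus (Scale (-1) \<alpha>) \<beta>)"
      using p g a b unfolding types_def by simp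
    also have "\<dots> = e * p FOne + (p (Scale (-1) \<alpha>) + p \<beta>)"
      using p a b unfolding types_def by simp
    also have "\<dots> = e - p \<alpha> + p \<beta>"
      using p a b unfolding types_def by simp
    finally show ?thesis .
  qed
  ultimately show ?thesis by simp
qed

lemma type_zero: "p \<in> types L M n A \<Longrightarrow> p (Scale 0 FOne) = 0"
  unfolding types_def by simp

lemma type_bound:
  assumes S: "is_structure L M" and p: "p \<in> types L M n A" and A: "A \<subseteq> carrier M"
  shows "\<bar>p \<phi>\<bar> \<le> fb \<phi>"
proof (cases "\<phi> \<in> fms L n A")
  case False
  then have "p \<phi> = 0" using p unfolding types_def by blast
  then show ?thesis using fb_nonneg by simp
next
  case True
  have "p \<phi> - p (Scale 0 FOne) \<le> fb \<phi>"
    by (rule type_diff[OF p True]) (use eval_at_bound[OF S _ True A] in \<open>auto simp: abs_le_iff\<close>)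
  moreover have "p (Scale 0 FOne) - p \<phi> \<le> fb \<phi>"
    by (rule type_diff[OF p _ True]) (use eval_at_bound[OF S _ True A] in \<open>auto simp: abs_le_iff\<close>)
  ultimately show ?thesis using type_zero[OF p] by (simp add: abs_le_iff)
qed

definition tp :: "('a, 'f, 'r) struct \<Rightarrow> ('f, 'r) lang \<Rightarrow> nat \<Rightarrow> 'a list \<Rightarrow> ('a, 'f, 'r) fm \<Rightarrow> real" where
  "tp M L n xs = (\<lambda>\<phi>. if \<phi> \<in> fms L n {} then eval_at M \<phi> xs else 0)"

lemma tp_type: "xs \<in> tuples M n \<Longrightarrow> tp M L n xs \<in> types L M n {}"
  unfolding types_def tp_def by auto

lemma tp_eval: "\<forall>\<phi>\<in>fms L n {}. tp M L n xs \<phi> = eval_at M \<phi> xs"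
  unfolding tp_def by simp

lemma types_closed: "closed (types L M n A)"
proof -
  let ?F = "fms L n A"
  have eq: "types L M n A =
      (\<Inter>\<phi>\<in>-?F. {p. p \<phi> = 0}) \<inter> {p. p FOne = 1} \<inter>
      (\<Inter>\<phi>\<in>?F. \<Inter>\<psi>\<in>?F. {p. p (Plus \<phi> \<psi>) = p \<phi> + p \<psi>}) \<inter>
      (\<Inter>\<phi>\<in>?F. \<Inter>c. {p. p (Scale c \<phi>) = c * p \<phi>}) \<inter>
      (\<Inter>\<phi>\<in>{\<phi>\<in>?F. \<forall>xs\<in>tuples M n. 0 \<le> eval_at M \<phi> xs}. {p. 0 \<le> p \<phi>})"
    unfolding types_def by auto
  have c: "continuous_on UNIV (\<lambda>p::('a, 'f, 'r) fm \<Rightarrow> real. p \<phi>)" for \<phi>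
    by simp
  show ?thesis unfolding eq
    by (intro closed_Int closed_INT ballI closed_Collect_eq closed_Collect_le continuous_on_add
        continuous_on_mult_left c continuous_on_const)
qed

lemma types_compact:
  assumes S: "is_structure L M" and A: "A \<subseteq> carrier M"
  shows "compact (types L M n A)"
proof -
  have sub: "types L M n A \<subseteq> {p. \<forall>i. \<bar>p i\<bar> \<le> fb i}"
  proof
    fix p assume "p \<in> types L M n A"
    then show "p \<in> {p. \<forall>i. \<bar>p i\<bar> \<le> fb i}" using type_bound[OF S _ A] by simp
  qed
  have "compact ({p. \<forall>i. \<bar>p i\<bar> \<le> fb i} \<inter> types L M n A)"
    by (rule compact_Int_closed[OF compact_box types_closed])
  moreover have "{p. \<forall>i. \<bar>p i\<bar> \<le> fb i} \<inter> types L M n A = types L M n A"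
    using sub by (rule Int_absorb1)
  ultimately show ?thesis by simp
qed

lemma hat:
  fixes L :: "('f, 'r) lang" and M :: "('a, 'f, 'r) struct" and P :: "'a list \<Rightarrow> real"
  assumes S: "is_structure L M" and D: "definable L M n P"
  shows "\<exists>H. continuous_on (types L M n {}) H \<and>
    (\<forall>p\<in>types L M n {}. \<forall>xs\<in>tuples M n. (\<forall>\<phi>\<in>fms L n {}. p \<phi> = eval_at M \<phi> xs) \<longrightarrow> H p = P xs) \<and>
    (\<forall>p\<in>types L M n {}. \<forall>q\<in>types L M n {}. \<forall>t. H (mix t p q) = t * H p + (1 - t) * H q) \<and>
    ((\<forall>xs\<in>tuples M n. 0 \<le> P xs) \<longrightarrow> (\<forall>p\<in>types L M n {}. 0 \<le> H p))"
proof -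
  let ?S = "types L M n {}"
  obtain \<phi> :: "nat \<Rightarrow> ('a, 'f, 'r) fm" where \<phi>: "\<And>k. \<phi> k \<in> fms L n {}"
    and u: "\<And>e. e > 0 \<Longrightarrow> \<exists>K. \<forall>k\<ge>K. \<forall>xs\<in>tuples M n. \<bar>eval_at M (\<phi> k) xs - P xs\<bar> \<le> e"
    using D unfolding definable_def by blast
  have U: "\<exists>K. \<forall>k\<ge>K. \<forall>j\<ge>K. \<forall>p\<in>?S. \<bar>p (\<phi> k) - p (\<phi> j)\<bar> \<le> e" if e: "e > 0" for e
  proof -
    obtain K where K: "\<forall>k\<ge>K. \<forall>xs\<in>tuples M n. \<bar>eval_at M (\<phi> k) xs - P xs\<bar> \<le> e/2"
      using u[of "e/2"] e by auto
    have "\<bar>p (\<phi> k) - p (\<phi> j)\<bar> \<le> e" if "k \<ge> K" "j \<ge> K" "p \<in> ?S" for k j p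
    proof -
      have d1: "eval_at M (\<phi> k) xs - eval_at M (\<phi> j) xs \<le> e" "eval_at M (\<phi> j) xs - eval_at M (\<phi> k) xs \<le> e"
        if "xs \<in> tuples M n" for xs
      proof -
        have "\<bar>eval_at M (\<phi> k) xs - P xs\<bar> \<le> e/2" "\<bar>eval_at M (\<phi> j) xs - P xs\<bar> \<le> e/2"
          using K \<open>k \<ge> K\<close> \<open>j \<ge> K\<close> that by auto
        then show "eval_at M (\<phi> k) xs - eval_at M (\<phi> j) xs \<le> e" "eval_at M (\<phi> j) xs - eval_at M (\<phi> k) xs \<le> e"
          unfolding abs_le_iff by linarith+
      qed
      have "p (\<phi> k) - p (\<phi> j) \<le> e" by (rule type_diff[OF that(3) \<phi> \<phi>]) (use d1 in blast)
      moreover have "p (\<phi> j) - p (\<phi> k) \<le> e" by (rule type_diff[OF that(3) \<phi> \<phi>]) (use d1 in blast)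
      ultimately show ?thesis unfolding abs_le_iff by linarith
    qed
    then show ?thesis by blast
  qed
  define H where "H = (\<lambda>p::('a, 'f, 'r) fm \<Rightarrow> real. lim (\<lambda>k. p (\<phi> k)))"
  have conv: "(\<lambda>k. p (\<phi> k)) \<longlonglongrightarrow> H p" if p: "p \<in> ?S" for p
  proof -
    have "Cauchy (\<lambda>k. p (\<phi> k))"
    proof (rule CauchyI)
      fix e :: real assume "0 < e"
      then obtain K where K: "\<forall>k\<ge>K. \<forall>j\<ge>K. \<forall>p\<in>?S. \<bar>p (\<phi> k) - p (\<phi> j)\<bar> \<le> e/2"
        using U[of "e/2"] by auto
      have "\<forall>k\<ge>K. \<forall>j\<ge>K. norm (p (\<phi> k) - p (\<phi> j)) < e"
      proof (intro allI impI)
        fix k j assume "K \<le> k" "K \<le> j"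
        then have "\<bar>p (\<phi> k) - p (\<phi> j)\<bar> \<le> e/2" using K p by blast
        then show "norm (p (\<phi> k) - p (\<phi> j)) < e" using \<open>0 < e\<close> by simp
      qed
      then show "\<exists>M. \<forall>m\<ge>M. \<forall>n\<ge>M. norm (p (\<phi> m) - p (\<phi> n)) < e" by blast
    qed
    then have "convergent (\<lambda>k. p (\<phi> k))" by (simp add: Cauchy_convergent_iff)
    then show ?thesis unfolding H_def by (simp add: convergent_LIMSEQ_iff)
  qed
  have unif: "\<exists>K. \<forall>k\<ge>K. \<forall>p\<in>?S. \<bar>p (\<phi> k) - H p\<bar> \<le> e" if e: "e > 0" for e
  proof -
    obtain K where K: "\<forall>k\<ge>K. \<forall>j\<ge>K. \<forall>p\<in>?S. \<bar>p (\<phi> k) - p (\<phi> j)\<bar> \<le> e" using U[OF e] by blast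
    have "\<bar>p (\<phi> k) - H p\<bar> \<le> e" if "k \<ge> K" "p \<in> ?S" for k p
    proof -
      have "(\<lambda>j. \<bar>p (\<phi> k) - p (\<phi> j)\<bar>) \<longlonglongrightarrow> \<bar>p (\<phi> k) - H p\<bar>"
        by (intro tendsto_intros conv[OF that(2)])
      moreover have "\<exists>N. \<forall>j\<ge>N. \<bar>p (\<phi> k) - p (\<phi> j)\<bar> \<le> e" using K that by blast
      ultimately show ?thesis by (rule LIMSEQ_le_const2)
    qed
    then show ?thesis by blast
  qed
  have cont: "continuous_on ?S H"
  proof (rule uniform_limit_theorem[where f="\<lambda>k p. p (\<phi> k)" and F=sequentially])
    show "\<forall>\<^sub>F k in sequentially. continuous_on ?S (\<lambda>p. p (\<phi> k))"
      by (intro always_eventually allI continuous_on_subset[OF continuous_on_product_coordinates]) simp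
    show "uniform_limit ?S (\<lambda>k p. p (\<phi> k)) H sequentially"
    proof (rule uniform_limitI)
      fix e :: real assume "e > 0"
      then obtain K where K: "\<forall>k\<ge>K. \<forall>p\<in>?S. \<bar>p (\<phi> k) - H p\<bar> \<le> e/2" using unif[of "e/2"] by auto
      have "\<forall>k\<ge>K. \<forall>p\<in>?S. dist (p (\<phi> k)) (H p) < e"
      proof (intro allI impI ballI)
        fix k p assume "K \<le> k" "p \<in> ?S"
        then have "\<bar>p (\<phi> k) - H p\<bar> \<le> e/2" using K by blast
        then show "dist (p (\<phi> k)) (H p) < e" using \<open>e > 0\<close> by (simp add: dist_real_def)
      qed
      then show "\<forall>\<^sub>F k in sequentially. \<forall>p\<in>?S. dist (p (\<phi> k)) (H p) < e"
        unfolding eventually_sequentially by blast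
    qed
    show "sequentially \<noteq> bot" by simp
  qed
  have real: "H p = P xs" if p: "p \<in> ?S" and xs: "xs \<in> tuples M n"
    and ev: "\<forall>\<psi>\<in>fms L n {}. p \<psi> = eval_at M \<psi> xs" for p xs
  proof -
    have "(\<lambda>k. p (\<phi> k)) \<longlonglongrightarrow> P xs"
    proof (rule LIMSEQ_I)
      fix r :: real assume "0 < r"
      then obtain K where K: "\<forall>k\<ge>K. \<forall>xs\<in>tuples M n. \<bar>eval_at M (\<phi> k) xs - P xs\<bar> \<le> r/2"
        using u[of "r/2"] by auto
      have "norm (p (\<phi> k) - P xs) < r" if "k \<ge> K" for k
      proof -
        have "\<bar>eval_at M (\<phi> k) xs - P xs\<bar> \<le> r/2" using K that xs by blast
        moreover have "p (\<phi> k) = eval_at M (\<phi> k) xs" using ev \<phi> by blast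
        ultimately show ?thesis using \<open>0 < r\<close> by simp
      qed
      then show "\<exists>no. \<forall>k\<ge>no. norm (p (\<phi> k) - P xs) < r" by blast
    qed
    then show ?thesis using conv[OF p] LIMSEQ_unique by blast
  qed
  have mixH: "H (mix t p q) = t * H p + (1 - t) * H q" if "p \<in> ?S" "q \<in> ?S" for p q t
  proof -
    have "(\<lambda>k. mix t p q (\<phi> k)) \<longlonglongrightarrow> t * H p + (1 - t) * H q"
      unfolding mix_def by (intro tendsto_intros conv that)
    then have "lim (\<lambda>k. mix t p q (\<phi> k)) = t * H p + (1 - t) * H q" by (rule limI)
    then show ?thesis by (simp add: H_def)
  qed
  have nonneg: "(\<forall>xs\<in>tuples M n. 0 \<le> P xs) \<longrightarrow> (\<forall>p\<in>?S. 0 \<le> H p)"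
  proof (intro impI ballI)
    assume P0: "\<forall>xs\<in>tuples M n. 0 \<le> P xs"
    fix p assume p: "p \<in> ?S"
    have ge: "- e \<le> H p" if e: "e > 0" for e
    proof -
      obtain K where K: "\<forall>k\<ge>K. \<forall>xs\<in>tuples M n. \<bar>eval_at M (\<phi> k) xs - P xs\<bar> \<le> e"
        using u[OF e] by blast
      have "p (Scale 0 FOne) - p (\<phi> k) \<le> e" if "k \<ge> K" for k
      proof (rule type_diff[OF p _ \<phi>])
        show "Scale 0 FOne \<in> fms L n {}" by simp
        show "\<forall>xs\<in>tuples M n. eval_at M (Scale 0 FOne) xs - eval_at M (\<phi> k) xs \<le> e"
        proof
          fix xs assume xs: "xs \<in> tuples M n"
          then have "\<bar>eval_at M (\<phi> k) xs - P xs\<bar> \<le> e" "0 \<le> P xs" using K P0 that by auto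
          then show "eval_at M (Scale 0 FOne) xs - eval_at M (\<phi> k) xs \<le> e"
            unfolding abs_le_iff by simp
        qed
      qed
      then have "\<forall>k\<ge>K. - e \<le> p (\<phi> k)" using type_zero[OF p] by force
      then show ?thesis using LIMSEQ_le_const[OF conv[OF p]] by blast
    qed
    show "0 \<le> H p"
    proof (rule ccontr)
      assume "\<not> 0 \<le> H p"
      then have "- (- H p / 2) \<le> H p" using ge[of "- H p / 2"] by simp
      then show False using \<open>\<not> 0 \<le> H p\<close> by linarith
    qed
  qed
  show ?thesis using cont real mixH nonneg by blast
qed

theorem mainTheorem17:
  fixes L :: "('f, 'r) lang" and M :: "('a, 'f, 'r) struct"
    and n :: nat and P Q :: "'a list \<Rightarrow> real"
  assumes "is_structure L M"
    and "extremally_aleph0_saturated L M"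
    and "definable L M n P" and "definable L M n Q"
    and "\<forall>xs\<in>tuples M n. 0 \<le> P xs" and "\<forall>xs\<in>tuples M n. 0 \<le> Q xs"
  shows "zero_set M n P \<subseteq> zero_set M n Q \<longleftrightarrow>
         (\<forall>\<epsilon>>0. \<exists>lam::real\<ge>0. \<forall>xs\<in>tuples M n. Q xs \<le> lam * P xs + \<epsilon>)"
proof
  assume R: "\<forall>\<epsilon>>0. \<exists>lam::real\<ge>0. \<forall>xs\<in>tuples M n. Q xs \<le> lam * P xs + \<epsilon>"
  show "zero_set M n P \<subseteq> zero_set M n Q"
  proof
    fix xs assume "xs \<in> zero_set M n P"
    then have xs: "xs \<in> tuples M n" "P xs = 0" by (auto simp: zero_set_def)
    have le: "Q xs \<le> e" if e: "e > 0" for e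
    proof -
      obtain lam where "lam \<ge> 0" "\<forall>xs\<in>tuples M n. Q xs \<le> lam * P xs + e" using R e by blast
      then have "Q xs \<le> lam * P xs + e" using xs(1) by blast
      then show ?thesis using xs(2) by simp
    qed
    have "0 \<le> Q xs" using assms(6) xs by blast
    moreover have "Q xs \<le> 0"
    proof (rule ccontr)
      assume "\<not> Q xs \<le> 0"
      then have "Q xs \<le> Q xs / 2" using le[of "Q xs / 2"] by simp
      then show False using \<open>\<not> Q xs \<le> 0\<close> by linarith
    qed
    ultimately show "xs \<in> zero_set M n Q" using xs by (simp add: zero_set_def)
  qed
next
  assume Z: "zero_set M n P \<subseteq> zero_set M n Q"
  show "\<forall>\<epsilon>>0. \<exists>lam::real\<ge>0. \<forall>xs\<in>tuples M n. Q xs \<le> lam * P xs + \<epsilon>"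
  proof (intro allI impI, rule ccontr)
    fix \<epsilon> :: real assume \<epsilon>: "\<epsilon> > 0"
      and neg: "\<not> (\<exists>lam::real\<ge>0. \<forall>xs\<in>tuples M n. Q xs \<le> lam * P xs + \<epsilon>)"
    let ?S = "types L M n {}"
    obtain HP where HPc: "continuous_on ?S HP"
      and HPr: "\<forall>p\<in>?S. \<forall>xs\<in>tuples M n. (\<forall>\<phi>\<in>fms L n {}. p \<phi> = eval_at M \<phi> xs) \<longrightarrow> HP p = P xs"
      and HPm: "\<forall>p\<in>?S. \<forall>q\<in>?S. \<forall>t. HP (mix t p q) = t * HP p + (1 - t) * HP q"
      and HPn: "(\<forall>xs\<in>tuples M n. 0 \<le> P xs) \<longrightarrow> (\<forall>p\<in>?S. 0 \<le> HP p)"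
      using hat[OF assms(1) assms(3)] by blast
    obtain HQ where HQc: "continuous_on ?S HQ"
      and HQr: "\<forall>p\<in>?S. \<forall>xs\<in>tuples M n. (\<forall>\<phi>\<in>fms L n {}. p \<phi> = eval_at M \<phi> xs) \<longrightarrow> HQ p = Q xs"
      and HQm: "\<forall>p\<in>?S. \<forall>q\<in>?S. \<forall>t. HQ (mix t p q) = t * HQ p + (1 - t) * HQ q"
      using hat[OF assms(1) assms(4)] by blast
    have HP0: "\<And>p. p \<in> ?S \<Longrightarrow> 0 \<le> HP p" using HPn assms(5) by blast
    have cS: "compact ?S" using types_compact[OF assms(1)] by simp
    have tpP: "HP (tp M L n xs) = P xs" "HQ (tp M L n xs) = Q xs" if "xs \<in> tuples M n" for xs
      using HPr HQr tp_type[OF that] tp_eval that by blast+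
    have wit: "\<exists>xs\<in>tuples M n. real k * P xs + \<epsilon> < Q xs" for k :: nat
    proof -
      have "\<not> (\<forall>xs\<in>tuples M n. Q xs \<le> real k * P xs + \<epsilon>)" using neg by auto
      then show ?thesis by (auto simp: not_le)
    qed
    define D where "D k = {p\<in>?S. \<epsilon> \<le> HQ p - real k * HP p}" for k :: nat
    have Dne: "D k \<noteq> {}" for k
    proof -
      obtain xs where xs: "xs \<in> tuples M n" "real k * P xs + \<epsilon> < Q xs" using wit by blast
      then have "tp M L n xs \<in> D k" using tp_type[OF xs(1)] tpP[OF xs(1)] by (simp add: D_def)
      then show ?thesis by blast
    qed
    have Dmono: "D j \<subseteq> D k" if "k \<le> j" for k j
    proof
      fix p assume p: "p \<in> D j"
      then have pS: "p \<in> ?S" and pe: "\<epsilon> \<le> HQ p - real j * HP p" by (auto simp: D_def)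
      have "real k * HP p \<le> real j * HP p" using HP0[OF pS] that by (intro mult_right_mono) auto
      then show "p \<in> D k" using pS pe by (simp add: D_def)
    qed
    have Dclosed: "closed (D k)" for k
    proof -
      have "D k = ?S \<inter> (\<lambda>p. HQ p - real k * HP p) -` {\<epsilon>..}" by (auto simp: D_def)
      moreover have "closed (?S \<inter> (\<lambda>p. HQ p - real k * HP p) -` {\<epsilon>..})"
        by (rule continuous_closed_preimage)
          (use HPc HQc compact_imp_closed_fun[OF cS] in \<open>auto intro!: continuous_intros\<close>)
      ultimately show ?thesis by simp
    qed
    have "?S \<inter> \<Inter>(range D) \<noteq> {}"
    proof (rule compact_imp_fip[OF cS])
      show "closed T" if "T \<in> range D" for T using that Dclosed by blast
      fix F' assume F': "finite F'" "F' \<subseteq> range D"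
      then obtain I where I: "finite I" "F' = D ` I" by (meson finite_subset_image)
      define N where "N = Max (insert 0 I)"
      have "D N \<subseteq> ?S \<inter> \<Inter>F'"
      proof
        fix p assume p: "p \<in> D N"
        have "p \<in> ?S" using p by (simp add: D_def)
        moreover have "p \<in> D i" if "i \<in> I" for i
          using Dmono[of i N] p that I(1) by (auto simp: N_def)
        ultimately show "p \<in> ?S \<inter> \<Inter>F'" using I(2) by blast
      qed
      then show "?S \<inter> \<Inter>F' \<noteq> {}" using Dne[of N] by blast
    qed
    then obtain p0 where p0S: "p0 \<in> ?S" and p0D: "\<And>k. p0 \<in> D k" by blast
    have p0k: "\<epsilon> \<le> HQ p0 - real k * HP p0" for k using p0D[of k] by (simp add: D_def)
    have HPp0: "HP p0 = 0"
    proof (rule ccontr)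
      assume "HP p0 \<noteq> 0"
      then have pos: "HP p0 > 0" using HP0[OF p0S] by simp
      obtain k :: nat where k: "HQ p0 / HP p0 < real k" using reals_Archimedean2 by blast
      then have "HQ p0 < real k * HP p0" using pos by (simp add: divide_less_eq)
      then show False using p0k[of k] \<epsilon> by linarith
    qed
    have HQp0: "\<epsilon> \<le> HQ p0" using p0k[of 0] by simp
    let ?G0 = "{p\<in>?S. \<forall>q\<in>?S. - HP q \<le> - HP p}"
    have G0: "face ?S ?G0 \<and> compact ?G0 \<and> ?G0 \<noteq> {}"
    proof (rule argmax_face[OF face_refl cS])
      show "?S \<noteq> {}" using p0S by blast
      show "continuous_on ?S (\<lambda>p. - HP p)" using HPc by (intro continuous_intros)
      show "- HP (mix t p q) = t * - HP p + (1 - t) * - HP q" if "p \<in> ?S" "q \<in> ?S" for p q t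
        using HPm that by (simp add: algebra_simps)
    qed
    have p0G0: "p0 \<in> ?G0" using p0S HPp0 HP0 by auto
    let ?G1 = "{p\<in>?G0. \<forall>q\<in>?G0. HQ q \<le> HQ p}"
    have G1: "face ?S ?G1 \<and> compact ?G1 \<and> ?G1 \<noteq> {}"
    proof (rule argmax_face)
      show "face ?S ?G0" by (rule G0[THEN conjunct1])
      show "compact ?G0" by (rule G0[THEN conjunct2, THEN conjunct1])
      show "?G0 \<noteq> {}" by (rule G0[THEN conjunct2, THEN conjunct2])
      show "continuous_on ?G0 HQ" by (rule continuous_on_subset[OF HQc]) blast
      show "HQ (mix t p q) = t * HQ p + (1 - t) * HQ q" if "p \<in> ?G0" "q \<in> ?G0" for p q t
        using HQm that by blast
    qed
    have ex: "\<exists>e\<in>?G1. \<forall>q1\<in>?S. \<forall>q2\<in>?S. \<forall>t. 0 < t \<and> t < 1 \<and> e = mix t q1 q2 \<longrightarrow> q1 = q2"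
      by (rule extreme_exists[OF G1[THEN conjunct1] G1[THEN conjunct2, THEN conjunct1] G1[THEN conjunct2, THEN conjunct2]])
    obtain e where eG1: "e \<in> ?G1"
      and ext: "\<forall>q1\<in>?S. \<forall>q2\<in>?S. \<forall>t. 0 < t \<and> t < 1 \<and> e = mix t q1 q2 \<longrightarrow> q1 = q2"
      by (rule bexE[OF ex])
    have e1: "e \<in> ?G0 \<and> (\<forall>q\<in>?G0. HQ q \<le> HQ e)"
      by (rule CollectD[where P="\<lambda>p. p \<in> ?G0 \<and> (\<forall>q\<in>?G0. HQ q \<le> HQ p)", OF eG1])
    then have eG0: "e \<in> ?G0" and eG1max: "\<forall>q\<in>?G0. HQ q \<le> HQ e" by (rule conjunct1, rule conjunct2)
    have e0: "e \<in> ?S \<and> (\<forall>q\<in>?S. - HP q \<le> - HP e)"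
      by (rule CollectD[where P="\<lambda>p. p \<in> ?S \<and> (\<forall>q\<in>?S. - HP q \<le> - HP p)", OF eG0])
    then have eS: "e \<in> ?S" and eG0max: "\<forall>q\<in>?S. - HP q \<le> - HP e" by (rule conjunct1, rule conjunct2)
    have "extreme_type L M n {} e"
      unfolding extreme_type_def using eS ext by (simp add: mix_def)
    then obtain xs where "realizes L M n {} xs e"
      using assms(2) unfolding extremally_aleph0_saturated_def by blast
    then have xs: "xs \<in> tuples M n" and ev: "\<forall>\<phi>\<in>fms L n {}. e \<phi> = eval_at M \<phi> xs"
      by (auto simp: realizes_def)
    have HPe: "HP e = P xs" using HPr eS xs ev by blast
    have HQe: "HQ e = Q xs" using HQr eS xs ev by blast
    have "- HP p0 \<le> - HP e" using eG0max p0S by blast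
    then have "HP e = 0" using HPp0 HP0[OF eS] by linarith
    then have "xs \<in> zero_set M n P" using HPe xs by (simp add: zero_set_def)
    then have "Q xs = 0" using Z by (auto simp: zero_set_def)
    moreover have "HQ p0 \<le> HQ e" using eG1max p0G0 by blast
    ultimately show False using HQe HQp0 \<epsilon> by linarith
  qed
qed

end
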